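(* There is an absolute constant $C$ such that for all integers $n\ge1$ and $1\le d\le n$, every $r\in\{0,1,\dots,d-1\}$ and every $\alpha\in(0,1)$, $$\Big|\sum_{\substack{0\le l\le n\\ l\equiv r \ (\mathrm{mod}\ d)}}\binom nl\alpha^l(1-\alpha)^{n-l}-\frac1d\Big|\le \frac{C}{\sqrt{\alpha(1-\alpha)n}}.$$ *)

theory Defs
  imports Complex_Main
begin

end

theory Submission imports Defs begin

lemma mod_shift_iff:
  fixes N d r :: nat assumes "r < d"
  shows "(N + (d - r)) mod d = 0 \<longleftrightarrow> N mod d = r"
proof -
  have a: "N mod d < d" using assms by simp
  have "(N + (d - r)) mod d = (N mod d + (d - r)) mod d" by (simp add: mod_add_left_eq)
  also have "(N mod d + (d - r)) mod d = 0 \<longleftrightarrow> N mod d = r"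
  proof (cases "r \<le> N mod d")
    case True
    then have "N mod d + (d - r) = (N mod d - r) + d" using assms by simp
    then have "(N mod d + (d - r)) mod d = N mod d - r" using a by (simp only: mod_add_self2) simp
    then show ?thesis using True by simp
  next
    case False
    then have "0 < N mod d + (d - r)" "N mod d + (d - r) < d" using assms by auto
    then show ?thesis using False assms by simp
  qed
  finally show ?thesis .
qed

lemma card_res:
  fixes N d r :: nat assumes "r < d"
  shows "card {l. l < N \<and> l mod d = r} = (N + (d - 1 - r)) div d"
proof (induction N)
  case 0
  then show ?case using assms by simp
next
  case (Suc N)
  have set: "{l. l < Suc N \<and> l mod d = r} = {l. l < N \<and> l mod d = r} \<union> (if N mod d = r then {N} else {})"
    by (auto simp: less_Suc_eq)
  have fin: "finite {l. l < N \<and> l mod d = r}" by simp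
  have c: "card {l. l < Suc N \<and> l mod d = r} = card {l. l < N \<and> l mod d = r} + (if N mod d = r then 1 else 0)"
    unfolding set using fin by (auto)
  have e: "Suc (N + (d - 1 - r)) = N + (d - r)" using assms by simp
  have "(Suc N + (d - 1 - r)) div d = Suc (N + (d - 1 - r)) div d" by simp
  also have "\<dots> = (N + (d - 1 - r)) div d + (if N mod d = r then 1 else 0)"
  proof -
    have m: "Suc (N + (d - 1 - r)) mod d = 0 \<longleftrightarrow> N mod d = r" using mod_shift_iff[OF assms, of N] e by metis
    show ?thesis by (simp only: div_Suc m) simp
  qed
  finally show ?case using c Suc.IH by simp
qed

lemma G_bounds:
  fixes x d r s :: nat assumes "s \<le> r" "r < d"
  shows "(x + (d - 1 - r)) div d \<le> (x + (d - 1 - s)) div d"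
    "(x + (d - 1 - s)) div d \<le> (x + (d - 1 - r)) div d + 1"
proof -
  show "(x + (d - 1 - r)) div d \<le> (x + (d - 1 - s)) div d"
    using assms by (intro div_le_mono) simp
  have "(x + (d - 1 - s)) div d \<le> ((x + (d - 1 - r)) + d) div d"
    using assms by (intro div_le_mono) simp
  also have "\<dots> = (x + (d - 1 - r)) div d + 1" using assms by (simp only: div_add_self2)
  finally show "(x + (d - 1 - s)) div d \<le> (x + (d - 1 - r)) div d + 1" .
qed

lemma card_res_int:
  fixes N d r k :: nat assumes "r < d" "k \<le> N"
  shows "card {l. k \<le> l \<and> l < N \<and> l mod d = r} = (N + (d - 1 - r)) div d - (k + (d - 1 - r)) div d"
proof -
  have sub: "{l. l < k \<and> l mod d = r} \<subseteq> {l. l < N \<and> l mod d = r}" using assms by auto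
  have eq: "{l. k \<le> l \<and> l < N \<and> l mod d = r} = {l. l < N \<and> l mod d = r} - {l. l < k \<and> l mod d = r}" by auto
  have f: "finite {l. l < k \<and> l mod d = r}" by simp
  show ?thesis unfolding eq card_Diff_subset[OF f sub] card_res[OF assms(1)] ..
qed

lemma card_res_diff:
  fixes N d r s k :: nat assumes "r < d" "s < d" "k \<le> N"
  shows "\<bar>real (card {l. k \<le> l \<and> l < N \<and> l mod d = r}) - real (card {l. k \<le> l \<and> l < N \<and> l mod d = s})\<bar> \<le> 1"
proof -
  have mono: "(k + (d - 1 - t)) div d \<le> (N + (d - 1 - t)) div d" for t
    using assms by (intro div_le_mono) simp
  have *: "\<bar>real (card {l. k \<le> l \<and> l < N \<and> l mod d = r}) - real (card {l. k \<le> l \<and> l < N \<and> l mod d = s})\<bar> \<le> 1"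
    if "s \<le> r" "r < d" "s < d" for r s
  proof -
    define A where "A = (N + (d - 1 - r)) div d"
    define B where "B = (k + (d - 1 - r)) div d"
    define A' where "A' = (N + (d - 1 - s)) div d"
    define B' where "B' = (k + (d - 1 - s)) div d"
    have a: "A \<le> A'" "A' \<le> A + 1" "B \<le> B'" "B' \<le> B + 1" "B \<le> A" "B' \<le> A'"
      using G_bounds[OF that(1,2), of N] G_bounds[OF that(1,2), of k] mono[of r] mono[of s]
      unfolding A_def B_def A'_def B'_def by auto
    have "real (A - B) = real A - real B" "real (A' - B') = real A' - real B'" using a by (auto simp: of_nat_diff)
    moreover have "real A \<le> real A'" "real A' \<le> real A + 1" "real B \<le> real B'" "real B' \<le> real B + 1"
      using a by auto
    ultimately have "\<bar>real (A - B) - real (A' - B')\<bar> \<le> 1" by linarith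
    then show ?thesis unfolding card_res_int[OF that(2) assms(3)] card_res_int[OF that(3) assms(3)]
      A_def B_def A'_def B'_def .
  qed
  show ?thesis
  proof (cases "s \<le> r")
    case True then show ?thesis using * assms by blast
  next
    case False
    then have "s \<ge> r" by simp
    from *[OF this assms(2,1)] show ?thesis by (simp only: abs_minus_commute)
  qed
qed

lemma telescope_b:
  fixes q :: "nat \<Rightarrow> real"
  shows "q l = (\<Sum>k\<le>l. q k - (if k = 0 then 0 else q (k - 1)))"
  by (induction l) auto

lemma S_repr:
  fixes q :: "nat \<Rightarrow> real"
  defines "b \<equiv> \<lambda>k. q k - (if k = 0 then 0 else q (k - 1))"
  shows "(\<Sum>l\<in>{l. l < N \<and> l mod d = r}. q l)
       = (\<Sum>k<N. b k * real (card {l. k \<le> l \<and> l < N \<and> l mod d = r}))"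
proof -
  have "(\<Sum>l\<in>{l. l < N \<and> l mod d = r}. q l) = (\<Sum>l\<in>{l. l < N \<and> l mod d = r}. \<Sum>k\<in>{k\<in>{..<N}. k \<le> l}. b k)"
  proof (rule sum.cong)
    fix l assume "l \<in> {l. l < N \<and> l mod d = r}"
    then have "{k\<in>{..<N}. k \<le> l} = {..l}" by auto
    then show "q l = (\<Sum>k\<in>{k\<in>{..<N}. k \<le> l}. b k)" using telescope_b[of q l] unfolding b_def by simp
  qed simp
  also have "\<dots> = (\<Sum>k<N. \<Sum>l\<in>{l\<in>{l. l < N \<and> l mod d = r}. k \<le> l}. b k)"
    by (rule sum.swap_restrict) auto
  also have "\<dots> = (\<Sum>k<N. b k * real (card {l. k \<le> l \<and> l < N \<and> l mod d = r}))"
  proof (rule sum.cong)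
    fix k
    have "{l\<in>{l. l < N \<and> l mod d = r}. k \<le> l} = {l. k \<le> l \<and> l < N \<and> l mod d = r}" by auto
    then show "(\<Sum>l\<in>{l\<in>{l. l < N \<and> l mod d = r}. k \<le> l}. b k) = b k * real (card {l. k \<le> l \<and> l < N \<and> l mod d = r})"
      by simp
  qed simp
  finally show ?thesis .
qed

lemma tv:
  fixes q :: "nat \<Rightarrow> real"
  assumes "r < d" "s < d"
  shows "\<bar>(\<Sum>l\<in>{l. l < N \<and> l mod d = r}. q l) - (\<Sum>l\<in>{l. l < N \<and> l mod d = s}. q l)\<bar>
       \<le> (\<Sum>k<N. \<bar>q k - (if k = 0 then 0 else q (k - 1))\<bar>)"
proof -
  define b where "b = (\<lambda>k. q k - (if k = 0 then 0 else q (k - 1)))"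
  define c where "c = (\<lambda>t k. real (card {l. k \<le> l \<and> l < N \<and> l mod d = t}))"
  have "(\<Sum>l\<in>{l. l < N \<and> l mod d = r}. q l) - (\<Sum>l\<in>{l. l < N \<and> l mod d = s}. q l)
      = (\<Sum>k<N. b k * (c r k - c s k))"
    unfolding S_repr[of q N d r] S_repr[of q N d s] b_def c_def
    by (simp add: sum_subtractf right_diff_distrib)
  also have "\<bar>\<dots>\<bar> \<le> (\<Sum>k<N. \<bar>b k * (c r k - c s k)\<bar>)" by (rule sum_abs)
  also have "\<dots> \<le> (\<Sum>k<N. \<bar>b k\<bar>)"
  proof (rule sum_mono)
    fix k assume "k \<in> {..<N}"
    then have "\<bar>c r k - c s k\<bar> \<le> 1" unfolding c_def using card_res_diff[OF assms, of k N] by simp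
    then have "\<bar>b k\<bar> * \<bar>c r k - c s k\<bar> \<le> \<bar>b k\<bar> * 1" by (intro mult_left_mono) auto
    then show "\<bar>b k * (c r k - c s k)\<bar> \<le> \<bar>b k\<bar>" by (simp add: abs_mult)
  qed
  finally show ?thesis unfolding b_def .
qed

definition bp :: "nat \<Rightarrow> real \<Rightarrow> nat \<Rightarrow> real" where
  "bp n a k = real (n choose k) * a ^ k * (1 - a) ^ (n - k)"

lemma bp_nonneg: "0 \<le> a \<Longrightarrow> a \<le> 1 \<Longrightarrow> 0 \<le> bp n a k"
  unfolding bp_def by simp

lemma bp_zero: "n < k \<Longrightarrow> bp n a k = 0"
  unfolding bp_def by simp

lemma bp_sum: "(\<Sum>k\<le>n. bp n a k) = 1"
  using binomial_ring[of a "1 - a" n] unfolding bp_def by simp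

lemma bp_rec: "bp n a (Suc k) * (real (Suc k) * (1 - a)) = bp n a k * (real (n - k) * a)"
proof (cases "k < n")
  case True
  have c: "real (Suc k) * real (n choose Suc k) = real (n - k) * real (n choose k)"
    using binomial_absorption[of k n] binomial_absorb_comp[of n k]
    by (metis of_nat_mult)
  have e: "(1 - a) ^ (n - k) = (1 - a) ^ (n - Suc k) * (1 - a)"
    using True by (metis Suc_diff_Suc power_Suc2)
  define Q where "Q = a ^ k * a * ((1 - a) ^ (n - Suc k) * (1 - a))"
  have l: "bp n a (Suc k) * (real (Suc k) * (1 - a)) = (real (Suc k) * real (n choose Suc k)) * Q"
    unfolding bp_def Q_def by (simp add: mult_ac)
  have r: "bp n a k * (real (n - k) * a) = (real (n - k) * real (n choose k)) * Q"
    unfolding bp_def Q_def e by (simp add: mult_ac)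
  show ?thesis unfolding l r c ..
next
  case False
  then show ?thesis unfolding bp_def by simp
qed

lemma bp_incr:
  assumes a: "0 < a" "a < 1" and k: "real (Suc k) \<le> real (Suc n) * a"
  shows "bp n a k \<le> bp n a (Suc k)"
proof -
  have kn: "k < n"
  proof (rule ccontr)
    assume "\<not> k < n" then have "real (Suc n) \<le> real (Suc k)" by simp
    then have "real (Suc n) \<le> real (Suc n) * a" using k by linarith
    then show False using a by (simp add: mult_le_cancel_left1)
  qed
  define X where "X = real (Suc k) * (1 - a)"
  define Y where "Y = real (n - k) * a"
  have Xp: "X > 0" unfolding X_def using a by simp
  have "Y - X = real (Suc n) * a - real (Suc k)" unfolding X_def Y_def using kn
    by (simp add: of_nat_diff algebra_simps)
  then have XY: "X \<le> Y" using k by simp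
  have r: "bp n a (Suc k) * X = bp n a k * Y" unfolding X_def Y_def by (rule bp_rec)
  have "bp n a k * X \<le> bp n a k * Y" using XY bp_nonneg[of a n k] a by (intro mult_left_mono) auto
  then have "bp n a k * X \<le> bp n a (Suc k) * X" using r by simp
  then show ?thesis using Xp by simp
qed

lemma bp_decr:
  assumes a: "0 < a" "a < 1" and k: "real (Suc n) * a < real (Suc k)"
  shows "bp n a (Suc k) \<le> bp n a k"
proof (cases "k < n")
  case kn: True
  define X where "X = real (Suc k) * (1 - a)"
  define Y where "Y = real (n - k) * a"
  have Xp: "X > 0" unfolding X_def using a by simp
  have "Y - X = real (Suc n) * a - real (Suc k)" unfolding X_def Y_def using kn
    by (simp add: of_nat_diff algebra_simps)
  then have XY: "Y \<le> X" using k by simp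
  have r: "bp n a (Suc k) * X = bp n a k * Y" unfolding X_def Y_def by (rule bp_rec)
  have "bp n a k * Y \<le> bp n a k * X" using XY bp_nonneg[of a n k] a by (intro mult_left_mono) auto
  then have "bp n a (Suc k) * X \<le> bp n a k * X" using r by simp
  then show ?thesis using Xp by simp
next
  case False
  then show ?thesis using bp_zero[of n "Suc k" a] bp_nonneg[of a n k] a by simp
qed

lemma bp_tv_eq:
  assumes a: "0 < a" "a < 1" and m: "real m \<le> real (Suc n) * a" "real (Suc n) * a < real (Suc m)"
  shows "(\<Sum>k<Suc j. \<bar>bp n a k - (if k = 0 then 0 else bp n a (k - 1))\<bar>)
         = (if j \<le> m then bp n a j else 2 * bp n a m - bp n a j)"
proof (induction j)
  case 0
  then show ?case using bp_nonneg[of a n 0] a by simp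
next
  case (Suc j)
  have h: "(\<Sum>k<Suc (Suc j). \<bar>bp n a k - (if k = 0 then 0 else bp n a (k - 1))\<bar>)
     = (if j \<le> m then bp n a j else 2 * bp n a m - bp n a j) + \<bar>bp n a (Suc j) - bp n a j\<bar>"
    using Suc.IH by simp
  show ?case
  proof (cases "Suc j \<le> m")
    case True
    then have "real (Suc j) \<le> real (Suc n) * a" using m by linarith
    then have "bp n a j \<le> bp n a (Suc j)" using bp_incr a by blast
    then show ?thesis using h True by auto
  next
    case False
    then have "real (Suc n) * a < real (Suc j)" using m by simp
    then have d: "bp n a (Suc j) \<le> bp n a j" using bp_decr a by blast
    show ?thesis
    proof (cases "j = m")
      case True
      then show ?thesis using h d False by auto
    next
      case False2: False
      then have "\<not> j \<le> m" using False by simp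
      then show ?thesis using h d False by auto
    qed
  qed
qed

lemma bp_tv:
  assumes a: "0 < a" "a < 1" and m: "real m \<le> real (Suc n) * a" "real (Suc n) * a < real (Suc m)"
    and mn: "m \<le> n"
  shows "(\<Sum>k<Suc n. \<bar>bp n a k - (if k = 0 then 0 else bp n a (k - 1))\<bar>) \<le> 2 * bp n a m"
  unfolding bp_tv_eq[OF a m] using bp_nonneg[of a n] a mn by auto

lemma bp_step_lower:
  assumes a: "0 < a" "a < 1" and m: "real m \<le> real (Suc n) * a" and mk: "m \<le> k"
  shows "bp n a k * (1 - real (Suc k - m) / (real (Suc m) * (1 - a))) \<le> bp n a (Suc k)"
proof -
  define B where "B = real (Suc m) * (1 - a)"
  define X where "X = real (Suc k) * (1 - a)"
  define s where "s = real (Suc k - m)"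
  have Bp: "B > 0" unfolding B_def using a by simp
  have BX: "B \<le> X" unfolding B_def X_def using a mk by (intro mult_right_mono) auto
  have s0: "s \<ge> 0" unfolding s_def by simp
  have sv: "s = real (Suc k) - real m" unfolding s_def using mk by (simp add: of_nat_diff)
  have "X - s = real m - real (Suc k) * a" unfolding X_def sv by (simp add: algebra_simps)
  also have "\<dots> \<le> (real n - real k) * a" using m by (simp add: algebra_simps)
  also have "\<dots> \<le> real (n - k) * a" using a by (intro mult_right_mono) auto
  finally have XS: "X - s \<le> real (n - k) * a" .
  have p0: "bp n a k \<ge> 0" using bp_nonneg a by simp
  have r: "bp n a (Suc k) * X = bp n a k * (real (n - k) * a)" unfolding X_def by (rule bp_rec)
  have "bp n a k * (X - s) \<le> bp n a (Suc k) * X" unfolding r using XS p0 by (intro mult_left_mono) auto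
  then have "bp n a k * (1 - s / X) \<le> bp n a (Suc k)" using Bp BX
    by (simp add: field_simps)
  moreover have "s / X \<le> s / B" using Bp BX s0 by (intro divide_left_mono) auto
  then have "bp n a k * (1 - s / B) \<le> bp n a k * (1 - s / X)" using p0 by (intro mult_left_mono) auto
  ultimately show ?thesis unfolding s_def B_def by linarith
qed

lemma bp_lower:
  assumes a: "0 < a" "a < 1" and m: "real m \<le> real (Suc n) * a"
  shows "bp n a m * (1 - real j ^ 2 / (real (Suc m) * (1 - a))) \<le> bp n a (m + j)"
proof (induction j)
  case 0
  then show ?case by simp
next
  case (Suc j)
  define B where "B = real (Suc m) * (1 - a)"
  have Bp: "B > 0" unfolding B_def using a by simp
  have p0: "bp n a m \<ge> 0" "bp n a (m + j) \<ge> 0" "bp n a (m + Suc j) \<ge> 0" using bp_nonneg a by auto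
  have st: "bp n a (m + j) * (1 - real (j + 1) / B) \<le> bp n a (m + Suc j)"
    using bp_step_lower[OF a m, of "m + j"] unfolding B_def by simp
  have IH: "bp n a m * (1 - real j ^ 2 / B) \<le> bp n a (m + j)" using Suc.IH unfolding B_def .
  have key: "bp n a m * (1 - real (Suc j) ^ 2 / B) \<le> bp n a (m + Suc j)"
  proof (cases "B \<le> real (Suc j) ^ 2")
    case True
    then have "1 - real (Suc j) ^ 2 / B \<le> 0" using Bp by (simp add: field_simps)
    then have "bp n a m * (1 - real (Suc j) ^ 2 / B) \<le> 0" using p0 by (simp add: mult_nonneg_nonpos)
    then show ?thesis using p0 by linarith
  next
    case False
    have j1: "real (j + 1) \<le> real (Suc j) ^ 2" by (simp add: power2_eq_square)
    then have f0: "0 \<le> 1 - real (j + 1) / B" using False Bp by (simp add: field_simps)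
    have "bp n a m * (1 - real j ^ 2 / B) * (1 - real (j + 1) / B) \<le> bp n a (m + j) * (1 - real (j + 1) / B)"
      using IH f0 by (intro mult_right_mono) auto
    moreover have "(1 - real (Suc j) ^ 2 / B) \<le> (1 - real j ^ 2 / B) * (1 - real (j + 1) / B)"
    proof -
      have "(1 - real j ^ 2 / B) * (1 - real (j + 1) / B) = 1 - (real j ^ 2 + real (j+1)) / B + real j ^ 2 * real (j + 1) / B^2"
        using Bp by (simp add: field_simps power2_eq_square)
      moreover have "real j ^ 2 * real (j + 1) / B^2 \<ge> 0" by simp
      moreover have "(real j ^ 2 + real (j+1)) / B \<le> real (Suc j) ^ 2 / B"
        using Bp by (intro divide_right_mono) (auto simp: power2_eq_square algebra_simps)
      ultimately show ?thesis by linarith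
    qed
    then have "bp n a m * (1 - real (Suc j) ^ 2 / B) \<le> bp n a m * ((1 - real j ^ 2 / B) * (1 - real (j + 1) / B))"
      using p0 by (intro mult_left_mono) auto
    ultimately show ?thesis using st by (simp add: mult.assoc)
  qed
  then show ?case unfolding B_def .
qed

lemma bp_sum_ext: "n \<le> M \<Longrightarrow> (\<Sum>k\<le>M. bp n a k) = 1"
proof -
  assume nM: "n \<le> M"
  have "(\<Sum>k\<le>M. bp n a k) = (\<Sum>k\<le>n. bp n a k)"
    using nM by (intro sum.mono_neutral_right) (auto simp: bp_zero)
  then show ?thesis using bp_sum by simp
qed

lemma bp_max:
  assumes a: "0 < a" "a < 1" and m: "real m \<le> real (Suc n) * a" "real (Suc n) * a < real (Suc m)"
  shows "bp n a m * sqrt (a * (1 - a) * real n) \<le> 2 * sqrt 2"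
proof -
  define B where "B = real (Suc m) * (1 - a)"
  have Bp: "B > 0" unfolding B_def using a by simp
  define t where "t = nat \<lfloor>sqrt (B / 2)\<rfloor>"
  have sq0: "sqrt (B/2) \<ge> 0" using Bp by simp
  have tf: "real t = of_int \<lfloor>sqrt (B / 2)\<rfloor>" unfolding t_def using sq0 by simp
  have t1: "real t \<le> sqrt (B / 2)" unfolding tf by simp
  have t2: "sqrt (B / 2) < real t + 1" unfolding tf using floor_correct[of "sqrt (B/2)"] by linarith
  have p0: "\<And>k. bp n a k \<ge> 0" using bp_nonneg a by auto
  have low: "bp n a m / 2 \<le> bp n a (m + j)" if "j \<le> t" for j
  proof -
    have "real j \<le> real t" using that by simp
    then have "real j ^ 2 \<le> sqrt (B/2) ^ 2" using t1 by (intro power_mono) auto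
    then have "real j ^ 2 \<le> B / 2" using Bp by simp
    then have "1/2 \<le> 1 - real j ^ 2 / B" using Bp by (simp add: field_simps)
    then have "bp n a m * (1/2) \<le> bp n a m * (1 - real j ^ 2 / B)" using p0 by (intro mult_left_mono) auto
    then show ?thesis using bp_lower[OF a m(1), of j] unfolding B_def by linarith
  qed
  have "(\<Sum>j\<le>t. bp n a m / 2) \<le> (\<Sum>j\<le>t. bp n a (m + j))"
    using low by (intro sum_mono) auto
  also have "(\<Sum>j\<le>t. bp n a (m + j)) = (\<Sum>k\<in>(\<lambda>j. m + j) ` {..t}. bp n a k)"
    by (subst sum.reindex) (auto simp: inj_on_def)
  also have "\<dots> \<le> (\<Sum>k\<le>m + t + n. bp n a k)"
    using p0 by (intro sum_mono2) auto
  also have "\<dots> = 1" by (rule bp_sum_ext) simp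
  finally have "real (Suc t) * (bp n a m / 2) \<le> 1" by simp
  then have bt: "bp n a m * (real t + 1) \<le> 2" by (simp add: algebra_simps)
  have "a * (1 - a) * real n \<le> B"
  proof -
    have "a * (1 - a) * real n \<le> real (Suc n) * a * (1 - a)" using a by (simp add: algebra_simps)
    also have "\<dots> \<le> real (Suc m) * (1 - a)" using m a by (intro mult_right_mono) auto
    finally show ?thesis unfolding B_def .
  qed
  then have "sqrt (a * (1 - a) * real n) \<le> sqrt B" by simp
  also have "sqrt B = sqrt 2 * sqrt (B / 2)" by (simp add: real_sqrt_mult[symmetric])
  also have "\<dots> \<le> sqrt 2 * (real t + 1)" using t2 by simp
  finally have "bp n a m * sqrt (a * (1 - a) * real n) \<le> bp n a m * (sqrt 2 * (real t + 1))"
    using p0 by (intro mult_left_mono) auto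
  also have "\<dots> = sqrt 2 * (bp n a m * (real t + 1))" by simp
  also have "\<dots> \<le> sqrt 2 * 2" using bt by (intro mult_left_mono) auto
  finally show ?thesis by simp
qed

theorem lemma1:
  shows "\<exists>C::real. \<forall>(n::nat) (d::nat) (r::nat) (\<alpha>::real).
    1 \<le> n \<longrightarrow> 1 \<le> d \<longrightarrow> d \<le> n \<longrightarrow> r < d \<longrightarrow> 0 < \<alpha> \<longrightarrow> \<alpha> < 1 \<longrightarrow>
    \<bar>(\<Sum>l\<in>{l. l \<le> n \<and> l mod d = r}. real (n choose l) * \<alpha> ^ l * (1 - \<alpha>) ^ (n - l)) - 1 / real d\<bar>
      \<le> C / sqrt (\<alpha> * (1 - \<alpha>) * real n)"
proof (intro exI allI impI)
  fix n d r :: nat and a :: real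
  assume n1: "1 \<le> n" and d1: "1 \<le> d" and dn: "d \<le> n" and rd: "r < d" and a0: "0 < a" and a1: "a < 1"
  have a: "0 < a" "a < 1" using a0 a1 by auto
  define m where "m = nat \<lfloor>real (Suc n) * a\<rfloor>"
  have x0: "real (Suc n) * a \<ge> 0" using a by simp
  have mf: "real m = of_int \<lfloor>real (Suc n) * a\<rfloor>" unfolding m_def using x0 by simp
  have m1: "real m \<le> real (Suc n) * a" unfolding mf by simp
  have "real (Suc n) * a < real m + 1" unfolding mf using floor_correct[of "real (Suc n) * a"] by linarith
  then have m2: "real (Suc n) * a < real (Suc m)" by simp
  have "real (Suc n) * a < real (Suc n)" using a by simp
  then have "real m < real (Suc n)" using m1 by linarith
  then have mn: "m \<le> n" by simp
  define S where "S = (\<lambda>s. \<Sum>l\<in>{l. l \<le> n \<and> l mod d = s}. bp n a l)"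
  have Seq: "S s = (\<Sum>l\<in>{l. l < Suc n \<and> l mod d = s}. bp n a l)" for s
    unfolding S_def by (rule sum.cong) auto
  have diff: "\<bar>S r - S s\<bar> \<le> 2 * bp n a m" if "s < d" for s
    unfolding Seq using tv[OF rd that, of "bp n a" "Suc n"] bp_tv[OF a m1 m2 mn] by linarith
  have tot: "(\<Sum>s<d. S s) = 1"
  proof -
    have "(\<Sum>s<d. S s) = (\<Sum>s<d. sum (bp n a) {l. l \<in> {..n} \<and> l mod d = s})"
      unfolding S_def by (rule sum.cong) auto
    also have "\<dots> = sum (bp n a) {..n}"
      using d1 by (intro sum.group) auto
    finally show ?thesis using bp_sum by simp
  qed
  have dp: "real d > 0" using d1 by simp
  have "S r - 1 / real d = (\<Sum>s<d. S r - S s) / real d"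
    using tot dp by (simp add: sum_subtractf field_simps)
  then have "\<bar>S r - 1 / real d\<bar> = \<bar>\<Sum>s<d. S r - S s\<bar> / real d" using dp by simp
  also have "\<dots> \<le> (\<Sum>s<d. \<bar>S r - S s\<bar>) / real d"
    using dp by (intro divide_right_mono sum_abs) auto
  also have "\<dots> \<le> (\<Sum>s<d. 2 * bp n a m) / real d"
    using dp diff by (intro divide_right_mono sum_mono) auto
  also have "\<dots> = 2 * bp n a m" using dp by simp
  finally have main: "\<bar>S r - 1 / real d\<bar> \<le> 2 * bp n a m" .
  define \<sigma> where "\<sigma> = sqrt (a * (1 - a) * real n)"
  have sp: "\<sigma> > 0" unfolding \<sigma>_def using a n1 by simp
  have "bp n a m * \<sigma> \<le> 2 * sqrt 2" unfolding \<sigma>_def by (rule bp_max[OF a m1 m2])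
  then have "2 * bp n a m \<le> 4 * sqrt 2 / \<sigma>" using sp by (simp add: field_simps)
  with main have "\<bar>S r - 1 / real d\<bar> \<le> 4 * sqrt 2 / \<sigma>" by linarith
  then show "\<bar>(\<Sum>l\<in>{l. l \<le> n \<and> l mod d = r}. real (n choose l) * a ^ l * (1 - a) ^ (n - l)) - 1 / real d\<bar>
      \<le> 4 * sqrt 2 / sqrt (a * (1 - a) * real n)"
    unfolding S_def \<sigma>_def bp_def .
qed

end
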